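(* Let $M$ be a magma satisfying $(xy)z = xy$ and $x(yz) = xy$ for all $x,y,z\in M$. Then $M$ satisfies $xy = xz$ and $(xy)z = xy$ for all $x,y,z\in M$ if and only if $M$ avoids the magma $P$ on $\{0,1,2,3\}$ with Cayley table \[ \begin{array}{c|cccc} P & 0 & 1 & 2 & 3 \\ \hline 0 & 2 & 3 & 2 & 2 \\ 1 & 1 & 1 & 1 & 1 \\ 2 & 2 & 2 & 2 & 2 \\ 3 & 3 & 3 & 3 & 3 \end{array}. \]
   Context: A magma is a nonempty set with a binary operation, written by juxtaposition. A magma $M$ avoids a magma $F$ if no submagma of $M$ is isomorphic to $F$. In the Cayley table, the entry in row $i$, column $j$ is $i\cdot j$. *)

theory Defs
  imports Main
begin

definition magma :: "'a set \<Rightarrow> ('a \<Rightarrow> 'a \<Rightarrow> 'a) \<Rightarrow> bool" where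
  "magma M f \<longleftrightarrow> M \<noteq> {} \<and> (\<forall>x\<in>M. \<forall>y\<in>M. f x y \<in> M)"

definition submagma :: "'a set \<Rightarrow> ('a \<Rightarrow> 'a \<Rightarrow> 'a) \<Rightarrow> 'a set \<Rightarrow> bool" where
  "submagma M f S \<longleftrightarrow> S \<noteq> {} \<and> S \<subseteq> M \<and> (\<forall>x\<in>S. \<forall>y\<in>S. f x y \<in> S)"

definition magma_iso :: "'a set \<Rightarrow> ('a \<Rightarrow> 'a \<Rightarrow> 'a) \<Rightarrow> 'b set \<Rightarrow> ('b \<Rightarrow> 'b \<Rightarrow> 'b) \<Rightarrow> bool" where
  "magma_iso A f B g \<longleftrightarrow> (\<exists>h. bij_betw h A B \<and> (\<forall>x\<in>A. \<forall>y\<in>A. h (f x y) = g (h x) (h y)))"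

definition avoids :: "'a set \<Rightarrow> ('a \<Rightarrow> 'a \<Rightarrow> 'a) \<Rightarrow> 'b set \<Rightarrow> ('b \<Rightarrow> 'b \<Rightarrow> 'b) \<Rightarrow> bool" where
  "avoids M f F g \<longleftrightarrow> \<not> (\<exists>S. submagma M f S \<and> magma_iso F g S f)"

text \<open>The magma P on {0,1,2,3}; entry in row i, column j is i*j.\<close>
definition P_carrier :: "nat set" where "P_carrier = {0,1,2,3}"

definition P_op :: "nat \<Rightarrow> nat \<Rightarrow> nat" where
  "P_op i j = (if i = 0 then (if j = 1 then 3 else 2) else i)"

end

theory Submission
  imports Defs
begin

lemma back_dir:
  assumes mag: "magma M f"
    and A: "\<forall>x\<in>M. \<forall>y\<in>M. \<forall>z\<in>M. f (f x y) z = f x y"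
    and B: "\<forall>x\<in>M. \<forall>y\<in>M. \<forall>z\<in>M. f x (f y z) = f x y"
    and a: "a \<in> M" and b: "b \<in> M" and ne: "f a b \<noteq> f a a"
  shows "\<not> avoids M f P_carrier P_op"
proof -
  define c where "c = f a a"
  define d where "d = f a b"
  define e where "e = f b b"
  have cM: "c \<in> M" and dM: "d \<in> M" and eM: "e \<in> M"
    using mag a b unfolding magma_def c_def d_def e_def by auto
  have lc: "\<And>z. z \<in> M \<Longrightarrow> f c z = c" using A a unfolding c_def by auto
  have ld: "\<And>z. z \<in> M \<Longrightarrow> f d z = d" using A a b unfolding d_def by auto
  have le: "\<And>z. z \<in> M \<Longrightarrow> f e z = e" using A b unfolding e_def by auto
  have ae: "f a e = d" using B a b unfolding e_def d_def by auto
  have ac: "f a c = c" using B a unfolding c_def by auto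
  have ad: "f a d = c" using B a b unfolding c_def d_def by auto
  have aa: "f a a = c" by (simp add: c_def)
  have cd: "c \<noteq> d" using ne c_def d_def by auto
  have ec: "e \<noteq> c" using ae ac cd by auto
  have ed: "e \<noteq> d" using ae ad cd by auto
  have ac': "a \<noteq> c" proof assume "a = c" then have "d = c" using lc[OF b] d_def by simp then show False using cd by simp qed
  have ad': "a \<noteq> d" proof assume "a = d" then have "c = d" using ld[OF a] c_def by simp then show False using cd by simp qed
  have ae': "a \<noteq> e" proof assume "a = e" then have "d = e" using le[OF eM] ae by simp then show False using ed by simp qed
  define S where "S = {a, e, c, d}"
  define h where "h = (\<lambda>i::nat. if i = 0 then a else if i = 1 then e else if i = 2 then c else d)"
  have sub: "submagma M f S"
    unfolding submagma_def S_def
    by (simp add: a cM dM eM lc ld le ae ac ad aa)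
  have "inj_on h P_carrier"
    unfolding inj_on_def h_def P_carrier_def
    using cd ec ed ac' ad' ae' by auto
  moreover have "h ` P_carrier = S" unfolding h_def P_carrier_def S_def by auto
  ultimately have bij: "bij_betw h P_carrier S" unfolding bij_betw_def by auto
  have hom: "\<forall>x\<in>P_carrier. \<forall>y\<in>P_carrier. h (P_op x y) = f (h x) (h y)"
  proof -
    have hv: "h 0 = a" "h 1 = e" "h 2 = c" "h 3 = d" "h (Suc 0) = e" by (simp_all add: h_def)
    show ?thesis unfolding P_carrier_def
      by (simp add: P_op_def hv aa lc ld le ae ac ad a cM dM eM)
  qed
  show ?thesis unfolding avoids_def magma_iso_def using sub bij hom by blast
qed

theorem mainTheorem15:
  fixes M :: "'a set" and f :: "'a \<Rightarrow> 'a \<Rightarrow> 'a"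
  assumes "magma M f"
    and "\<forall>x\<in>M. \<forall>y\<in>M. \<forall>z\<in>M. f (f x y) z = f x y"
    and "\<forall>x\<in>M. \<forall>y\<in>M. \<forall>z\<in>M. f x (f y z) = f x y"
  shows "((\<forall>x\<in>M. \<forall>y\<in>M. \<forall>z\<in>M. f x y = f x z \<and> f (f x y) z = f x y)
          \<longleftrightarrow> avoids M f P_carrier P_op)"
proof
  assume L: "\<forall>x\<in>M. \<forall>y\<in>M. \<forall>z\<in>M. f x y = f x z \<and> f (f x y) z = f x y"
  show "avoids M f P_carrier P_op"
    unfolding avoids_def
  proof
    assume "\<exists>S. submagma M f S \<and> magma_iso P_carrier P_op S f"
    then obtain S h where sub: "submagma M f S" and bij: "bij_betw h P_carrier S"
      and hom: "\<forall>x\<in>P_carrier. \<forall>y\<in>P_carrier. h (P_op x y) = f (h x) (h y)"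
      unfolding magma_iso_def by blast
    have in0: "(0::nat) \<in> P_carrier" and in1: "(1::nat) \<in> P_carrier"
      and in2: "(2::nat) \<in> P_carrier" and in3: "(3::nat) \<in> P_carrier"
      unfolding P_carrier_def by auto
    have h0: "h 0 \<in> M" and h1: "h 1 \<in> M"
      using bij sub in0 in1 unfolding bij_betw_def submagma_def by auto
    have p00: "P_op 0 0 = 2" and p01: "P_op 0 1 = 3" by (simp_all add: P_op_def)
    have e00: "h (P_op 0 0) = f (h 0) (h 0)" using hom in0 by blast
    have e01: "h (P_op 0 1) = f (h 0) (h 1)" using hom in0 in1 by blast
    have "h 2 = f (h 0) (h 0)" using e00 p00 by simp
    also have "\<dots> = f (h 0) (h 1)" using L h0 h1 by metis
    also have "\<dots> = h 3" using e01 p01 by simp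
    finally have "h 2 = h 3" .
    moreover have "inj_on h P_carrier" using bij unfolding bij_betw_def by blast
    ultimately have "(2::nat) = 3" using in2 in3 unfolding inj_on_def by blast
    then show False by simp
  qed
next
  assume av: "avoids M f P_carrier P_op"
  show "\<forall>x\<in>M. \<forall>y\<in>M. \<forall>z\<in>M. f x y = f x z \<and> f (f x y) z = f x y"
  proof (intro ballI conjI)
    fix x y z assume x: "x \<in> M" and y: "y \<in> M" and z: "z \<in> M"
    show "f (f x y) z = f x y" using assms(2) x y z by blast
    show "f x y = f x z"
    proof (rule ccontr)
      assume "f x y \<noteq> f x z"
      then have "f x y \<noteq> f x x \<or> f x z \<noteq> f x x" by auto
      then show False
      proof
        assume "f x y \<noteq> f x x" then show False using back_dir[OF assms x y] av by blast
      next
        assume "f x z \<noteq> f x x" then show False using back_dir[OF assms x z] av by blast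
      qed
    qed
  qed
qed

end
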